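(* Consider $n$ parallel roads (indexed by $i\in[n]$) shared by $m$ vehicle types (indexed by $j\in[m]$), vehicle type $j$ having demand $\bar f^j\ge0$. A feasible routing is $f=(f^j_i)$ with $f^j_i\ge0$ and $\sum_i f^j_i=\bar f^j$ for each $j$. Road $i$ has latency $\ell_i(f)=b_i+\sum_j a^j_i f^j_i$, where $b_i\ge 0$ and the latency of every road is strictly increasing in the flow of each vehicle type on it (i.e. $a^j_i>0$ for all $i,j$). The social cost is $J(f)=\sum_i\big(\sum_j f^j_i\big)\ell_i(f)$. Given tolls $\tau=(\tau^j_i)$, the cost experienced by type $j$ on road $i$ is $c^j_i(f)=\ell_i(f)+\tau^j_i$, and a feasible routing $f$ is an equilibrium if for every $j$ and every road $i$ with $f^j_i>0$ one has $c^j_i(f)\le c^j_{i'}(f)$ for all $i'\in[n]$. For a routing $f$, let $\mathcal N^f_j=\{i: f^j_i>0\}$, and let $G(f)$ be the bipartite graph on the roads and the vehicle types with an edge between road $i$ and type $j$ iff $f^j_i>0$. Let $f^*$ be a feasible routing minimizing $J$ such that $G(f^* )$ is acyclic. Let $\mu$ be a constant, and levy the tolls $$\tau^j_i(f^* )=\begin{cases}\mu-\ell_i(f^* ) & \text{if } i\in\mathcal N^{f^*}_j,\\ P & \text{otherwise.}\end{cases}$$ Then, for sufficiently large $P$, the only equilibrium under these tolls is $f^*$.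
   Context: Parallel-road network with multiple vehicle types, affine road latencies with type-dependent coefficients, social cost equal to total latency; tolls may be vehicle-type- and road-specific. The existence of a socially optimal routing $f^*$ with acyclic $G(f^* )$ is guaranteed for this model. *)

theory Defs
  imports Complex_Main
begin

text \<open>A routing is f :: nat => nat => real, with f i j the flow of type j on road i.\<close>

definition feasible :: "nat \<Rightarrow> nat \<Rightarrow> (nat \<Rightarrow> real) \<Rightarrow> (nat \<Rightarrow> nat \<Rightarrow> real) \<Rightarrow> bool" where
  "feasible n m d f \<longleftrightarrow>
     (\<forall>i<n. \<forall>j<m. f i j \<ge> 0) \<and> (\<forall>j<m. (\<Sum>i<n. f i j) = d j)"

definition latency :: "nat \<Rightarrow> (nat \<Rightarrow> nat \<Rightarrow> real) \<Rightarrow> (nat \<Rightarrow> real) \<Rightarrow> (nat \<Rightarrow> nat \<Rightarrow> real) \<Rightarrow> nat \<Rightarrow> real" where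
  "latency m a b f i = b i + (\<Sum>j<m. a i j * f i j)"

definition social_cost :: "nat \<Rightarrow> nat \<Rightarrow> (nat \<Rightarrow> nat \<Rightarrow> real) \<Rightarrow> (nat \<Rightarrow> real) \<Rightarrow> (nat \<Rightarrow> nat \<Rightarrow> real) \<Rightarrow> real" where
  "social_cost n m a b f = (\<Sum>i<n. (\<Sum>j<m. f i j) * latency m a b f i)"

definition is_equilibrium ::
  "nat \<Rightarrow> nat \<Rightarrow> (nat \<Rightarrow> nat \<Rightarrow> real) \<Rightarrow> (nat \<Rightarrow> real) \<Rightarrow> (nat \<Rightarrow> real)
   \<Rightarrow> (nat \<Rightarrow> nat \<Rightarrow> real) \<Rightarrow> (nat \<Rightarrow> nat \<Rightarrow> real) \<Rightarrow> bool" where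
  "is_equilibrium n m a b d tau f \<longleftrightarrow> feasible n m d f \<and>
     (\<forall>j<m. \<forall>i<n. f i j > 0 \<longrightarrow>
        (\<forall>i'<n. latency m a b f i + tau i j \<le> latency m a b f i' + tau i' j))"

definition support_edge :: "nat \<Rightarrow> nat \<Rightarrow> (nat \<Rightarrow> nat \<Rightarrow> real) \<Rightarrow> nat + nat \<Rightarrow> nat + nat \<Rightarrow> bool" where
  "support_edge n m f u v \<longleftrightarrow>
     (\<exists>i j. i < n \<and> j < m \<and> f i j > 0 \<and>
        ((u = Inl i \<and> v = Inr j) \<or> (u = Inr j \<and> v = Inl i)))"

definition support_acyclic :: "nat \<Rightarrow> nat \<Rightarrow> (nat \<Rightarrow> nat \<Rightarrow> real) \<Rightarrow> bool" where
  "support_acyclic n m f \<longleftrightarrow>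
     \<not> (\<exists>vs. length vs \<ge> 3 \<and> distinct vs \<and>
           (\<forall>k. Suc k < length vs \<longrightarrow> support_edge n m f (vs ! k) (vs ! Suc k)) \<and>
           support_edge n m f (last vs) (hd vs))"

definition opt_tolls ::
  "nat \<Rightarrow> (nat \<Rightarrow> nat \<Rightarrow> real) \<Rightarrow> (nat \<Rightarrow> real) \<Rightarrow> (nat \<Rightarrow> nat \<Rightarrow> real) \<Rightarrow> real \<Rightarrow> real
   \<Rightarrow> nat \<Rightarrow> nat \<Rightarrow> real" where
  "opt_tolls m a b fs \<mu> P i j = (if fs i j > 0 then \<mu> - latency m a b fs i else P)"

end

theory Submission
  imports Defs
begin

lemma walk_cycle:
  fixes I J :: "nat \<Rightarrow> nat"
  assumes H: "\<forall>k. I k < n \<and> J k < m \<and> fs (I k) (J k) > 0 \<and> fs (I (Suc k)) (J k) > 0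
              \<and> I (Suc k) \<noteq> I k \<and> J (Suc k) \<noteq> J k"
  shows "\<not> support_acyclic n m fs"
proof -
  define v where "v k = (if even k then Inl (I (k div 2)) else Inr (J (k div 2)))" for k :: nat
  have adj: "support_edge n m fs (v k) (v (Suc k))" for k
  proof (cases "even k")
    case True
    then obtain t where k: "k = 2*t" by blast
    show ?thesis unfolding support_edge_def v_def using H[rule_format, of t] k by auto
  next
    case False
    then obtain t where k: "k = 2*t+1" using oddE by blast
    have "Suc k div 2 = Suc t" using k by simp
    have e: "I (Suc t) < n" "J t < m" "fs (I (Suc t)) (J t) > 0"
      using H[rule_format, of t] H[rule_format, of "Suc t"] by auto
    have "v k = Inr (J t)" "v (Suc k) = Inl (I (Suc t))" using k by (auto simp: v_def)
    then show ?thesis unfolding support_edge_def using e by blast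
  qed
  have nb1: "v k \<noteq> v (Suc k)" for k unfolding v_def by auto
  have nb2: "v k \<noteq> v (Suc (Suc k))" for k
  proof (cases "even k")
    case True
    then obtain t where k: "k = 2*t" by blast
    then show ?thesis unfolding v_def using H[rule_format, of t] by auto
  next
    case False
    then obtain t where k: "k = 2*t+1" using oddE by blast
    then show ?thesis unfolding v_def using H[rule_format, of t] by auto
  qed
  have "range v \<subseteq> Inl ` {..<n} \<union> Inr ` {..<m}" unfolding v_def using H by auto
  then have "finite (range v)" by (meson finite_Un finite_imageI finite_lessThan finite_subset)
  then have "\<not> inj v" using finite_imageD infinite_UNIV_nat by blast
  then obtain p q where "p \<noteq> q" "v p = v q" unfolding inj_def by blast
  then have ex: "\<exists>q p. p < q \<and> v p = v q"
  proof (cases "p < q")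
    case True
    then show ?thesis using \<open>v p = v q\<close> by blast
  next
    case False
    then have "q < p" using \<open>p \<noteq> q\<close> by simp
    moreover have "v q = v p" using \<open>v p = v q\<close> by simp
    ultimately show ?thesis by blast
  qed
  define q0 where "q0 = (LEAST q. \<exists>p. p < q \<and> v p = v q)"
  have "\<exists>p. p < q0 \<and> v p = v q0" unfolding q0_def by (rule LeastI_ex[OF ex])
  then obtain p0 where p0: "p0 < q0" "v p0 = v q0" by blast
  have minq: "v a \<noteq> v b" if "a < b" "b < q0" for a b
  proof
    assume "v a = v b"
    then have "\<exists>p. p < b \<and> v p = v b" using that by blast
    then have "q0 \<le> b" unfolding q0_def by (rule Least_le)
    then show False using that by simp
  qed
  define vs where "vs = map v [p0..<q0]"
  have len: "length vs \<ge> 3"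
  proof -
    have "q0 \<noteq> Suc p0" using p0 nb1 by metis
    moreover have "q0 \<noteq> Suc (Suc p0)" using p0 nb2 by metis
    ultimately show ?thesis unfolding vs_def using p0 by simp
  qed
  have "inj_on v {p0..<q0}"
      unfolding inj_on_def
      by (metis atLeastLessThan_iff linorder_neqE_nat minq)
  then have dist: "distinct vs" unfolding vs_def by (simp add: distinct_map)
  have cons: "\<forall>k. Suc k < length vs \<longrightarrow> support_edge n m fs (vs ! k) (vs ! Suc k)"
    unfolding vs_def using adj by auto
  have hd: "hd vs = v p0" unfolding vs_def using p0 by (simp add: hd_map hd_upt)
  have lst: "last vs = v (q0 - 1)" unfolding vs_def using p0 by (simp add: last_map)
  have "support_edge n m fs (last vs) (hd vs)"
    using hd lst p0 adj[of "q0 - 1"] by simp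
  then show ?thesis unfolding support_acyclic_def using len dist cons by blast
qed

lemma walk_exists:
  assumes "i0 \<in> S" "\<forall>i\<in>S. \<exists>j i'. i' \<in> S \<and> R i j i'"
  shows "\<exists>I J. \<forall>k. I k \<in> S \<and> R (I k) (J k) (I (Suc k))"
proof -
  have "\<forall>i\<in>S. \<exists>p. snd p \<in> S \<and> R i (fst p) (snd p)" using assms(2) by auto
  then obtain g where g: "\<forall>i\<in>S. snd (g i) \<in> S \<and> R i (fst (g i)) (snd (g i))"
    by metis
  define I where "I = rec_nat i0 (\<lambda>_ i. snd (g i))"
  have IS: "I k \<in> S" for k
    by (induction k) (auto simp: I_def assms(1) g)
  have IS2: "I (Suc k) = snd (g (I k))" for k by (simp add: I_def)
  have "\<forall>k. I k \<in> S \<and> R (I k) (fst (g (I k))) (I (Suc k))"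
  proof
    fix k
    have "R (I k) (fst (g (I k))) (snd (g (I k)))" using g IS[of k] by blast
    then show "I k \<in> S \<and> R (I k) (fst (g (I k))) (I (Suc k))" using IS[of k] IS2[of k] by simp
  qed
  then show ?thesis by (rule exI[of _ I, OF exI[of _ "\<lambda>k. fst (g (I k))"]])
qed

lemma walk_contra:
  assumes "i0 \<in> S" "S \<subseteq> {..<n}"
    and "\<forall>i\<in>S. \<exists>j i'. i' \<in> S \<and> j < m \<and> fs i j > 0 \<and> fs i' j > 0 \<and> Pr i j \<and> Qr i' j"
    and "\<forall>i j. \<not> (Pr i j \<and> Qr i j)"
  shows "\<not> support_acyclic n m fs"
proof -
  define R where "R = (\<lambda>i j i'. j < m \<and> fs i j > 0 \<and> fs i' j > 0 \<and> Pr i j \<and> Qr i' j)"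
  have h: "\<forall>i\<in>S. \<exists>j i'. i' \<in> S \<and> R i j i'" using assms(3) unfolding R_def by simp
  obtain I J where IJ0: "\<forall>k. I k \<in> S \<and> R (I k) (J k) (I (Suc k))"
    using walk_exists[OF assms(1) h] by blast
  have IJ: "I k \<in> S" "J k < m" "fs (I k) (J k) > 0" "fs (I (Suc k)) (J k) > 0"
     "Pr (I k) (J k)" "Qr (I (Suc k)) (J k)" for k
    using IJ0[rule_format, of k] unfolding R_def by auto
  show ?thesis
  proof (rule walk_cycle[of I n J m fs], intro allI conjI)
    fix k
    show "I k < n" using IJ(1) assms(2) by blast
    show "J k < m" "fs (I k) (J k) > 0" "fs (I (Suc k)) (J k) > 0" using IJ by auto
    show "I (Suc k) \<noteq> I k" using IJ(5)[of k] IJ(6)[of k] assms(4) by metis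
    show "J (Suc k) \<noteq> J k" using IJ(5)[of "Suc k"] IJ(6)[of k] assms(4) by metis
  qed
qed

lemma f_le_d:
  assumes "feasible n m d f" "i < n" "j < m"
  shows "f i j \<le> d j"
proof -
  have "d j = (\<Sum>i'<n. f i' j)" using assms unfolding feasible_def by simp
  moreover have "f i j \<le> (\<Sum>i'<n. f i' j)"
    by (rule member_le_sum) (use assms in \<open>auto simp: feasible_def\<close>)
  ultimately show ?thesis by simp
qed

lemma lat_nonneg:
  assumes "\<forall>i<n. b i \<ge> 0" "\<forall>i<n. \<forall>j<m. a i j > 0" "feasible n m d f" "i < n"
  shows "0 \<le> latency m a b f i"
proof -
  have "0 \<le> (\<Sum>j<m. a i j * f i j)"
    by (rule sum_nonneg) (use assms in \<open>auto simp: feasible_def less_imp_le\<close>)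
  then show ?thesis unfolding latency_def using assms by auto
qed

lemma lat_le:
  assumes "\<forall>i<n. b i \<ge> 0" "\<forall>i<n. \<forall>j<m. a i j > 0" "\<forall>j<m. d j \<ge> 0"
    "feasible n m d f" "i < n"
  shows "latency m a b f i \<le> (\<Sum>i<n. b i + (\<Sum>j<m. a i j * d j))"
proof -
  have "(\<Sum>j<m. a i j * f i j) \<le> (\<Sum>j<m. a i j * d j)"
  proof (rule sum_mono)
    fix j assume "j \<in> {..<m}"
    then show "a i j * f i j \<le> a i j * d j"
    proof -
      have "0 < a i j" using assms(2) assms(5) \<open>j \<in> {..<m}\<close> by simp
      then show ?thesis using f_le_d[OF assms(4) assms(5), of j] \<open>j \<in> {..<m}\<close>
        by (intro mult_left_mono) simp_all
    qed
  qed
  then have "latency m a b f i \<le> b i + (\<Sum>j<m. a i j * d j)" unfolding latency_def by simp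
  also have "\<dots> \<le> (\<Sum>i<n. b i + (\<Sum>j<m. a i j * d j))"
  proof (rule member_le_sum)
    show "i \<in> {..<n}" using assms by simp
    fix k assume "k \<in> {..<n} - {i}"
    then have "k < n" by simp
    have "0 \<le> (\<Sum>j<m. a k j * d j)"
      by (rule sum_nonneg) (use assms \<open>k < n\<close> in \<open>auto simp: less_imp_le\<close>)
    then show "0 \<le> b k + (\<Sum>j<m. a k j * d j)" using assms \<open>k < n\<close> by auto
  qed simp
  finally show ?thesis .
qed

theorem theorem2:
  fixes n m :: nat
    and a :: "nat \<Rightarrow> nat \<Rightarrow> real" and b :: "nat \<Rightarrow> real" and d :: "nat \<Rightarrow> real"
    and fs :: "nat \<Rightarrow> nat \<Rightarrow> real" and \<mu> :: real
  assumes b_nonneg: "\<forall>i<n. b i \<ge> 0"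
    and a_pos: "\<forall>i<n. \<forall>j<m. a i j > 0"
    and d_nonneg: "\<forall>j<m. d j \<ge> 0"
    and fs_feasible: "feasible n m d fs"
    and fs_opt: "\<forall>g. feasible n m d g \<longrightarrow> social_cost n m a b fs \<le> social_cost n m a b g"
    and fs_acyclic: "support_acyclic n m fs"
  shows "\<exists>P0. \<forall>P\<ge>P0. \<forall>f.
           is_equilibrium n m a b d (opt_tolls m a b fs \<mu> P) f
             \<longleftrightarrow> (\<forall>i<n. \<forall>j<m. f i j = fs i j)"
proof -
  define L where "L = (\<Sum>i<n. b i + (\<Sum>j<m. a i j * d j))"
  define P0 where "P0 = \<bar>\<mu>\<bar> + L + 1"
  have fs0: "fs i j \<ge> 0" if "i < n" "j < m" for i j
    using fs_feasible that unfolding feasible_def by auto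
  have latfs0: "latency m a b fs i \<ge> 0" if "i < n" for i
    using lat_nonneg[OF b_nonneg a_pos fs_feasible that] .
  show ?thesis
  proof (rule exI[of _ P0], intro allI impI)
    fix P f assume PP: "P0 \<le> P"
    let ?tau = "opt_tolls m a b fs \<mu> P"
    show "is_equilibrium n m a b d ?tau f \<longleftrightarrow> (\<forall>i<n. \<forall>j<m. f i j = fs i j)"
    proof
      assume eq: "\<forall>i<n. \<forall>j<m. f i j = fs i j"
      have lat: "latency m a b f i = latency m a b fs i" if "i < n" for i
        unfolding latency_def using eq that by simp
      have feas: "feasible n m d f"
        using fs_feasible eq unfolding feasible_def by simp
      show "is_equilibrium n m a b d ?tau f"
        unfolding is_equilibrium_def
      proof (intro conjI feas allI impI)
        fix j i i' assume j: "j < m" and i: "i < n" and fp: "f i j > 0" and i': "i' < n"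
        have "fs i j > 0" using fp eq i j by simp
        then have lhs: "latency m a b f i + ?tau i j = \<mu>"
          using lat[OF i] unfolding opt_tolls_def by simp
        have "\<mu> \<le> latency m a b f i' + ?tau i' j"
        proof (cases "fs i' j > 0")
          case True
          then show ?thesis using lat[OF i'] unfolding opt_tolls_def by simp
        next
          case False
          have "L \<ge> 0" using lat_le[OF b_nonneg a_pos d_nonneg fs_feasible i] latfs0[OF i]
            unfolding L_def by linarith
          then have "\<mu> \<le> P" using PP unfolding P0_def by linarith
          then show ?thesis using False lat[OF i'] latfs0[OF i'] unfolding opt_tolls_def by simp
        qed
        then show "latency m a b f i + ?tau i j \<le> latency m a b f i' + ?tau i' j"
          using lhs by simp
      qed
    next
      assume E: "is_equilibrium n m a b d ?tau f"
      have Ff: "feasible n m d f" using E unfolding is_equilibrium_def by simp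
      have eqc: "latency m a b f i + ?tau i j \<le> latency m a b f i' + ?tau i' j"
        if "j < m" "i < n" "f i j > 0" "i' < n" for i j i'
        using E that unfolding is_equilibrium_def by blast
      have f0: "f i j \<ge> 0" if "i < n" "j < m" for i j
        using Ff that unfolding feasible_def by auto
      have step1: "fs i j > 0" if ij: "i < n" "j < m" "f i j > 0" for i j
      proof (rule ccontr)
        assume nfs: "\<not> fs i j > 0"
        have "f i j \<le> d j" using f_le_d[OF Ff ij(1,2)] .
        then have "(\<Sum>i'<n. fs i' j) > 0" using fs_feasible ij unfolding feasible_def by simp
        then obtain i' where i': "i' < n" "fs i' j > 0"
          by (metis lessThan_iff not_le sum_nonpos)
        have "latency m a b f i + P \<le> latency m a b f i' + (\<mu> - latency m a b fs i')"
          using eqc[OF ij(2) ij(1) ij(3) i'(1)] nfs i'(2) unfolding opt_tolls_def by simp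
        moreover have "latency m a b f i \<ge> 0" using lat_nonneg[OF b_nonneg a_pos Ff ij(1)] .
        moreover have "latency m a b f i' \<le> L"
          using lat_le[OF b_nonneg a_pos d_nonneg Ff i'(1)] unfolding L_def .
        moreover have "latency m a b fs i' \<ge> 0" using latfs0[OF i'(1)] .
        ultimately show False using PP unfolding P0_def by linarith
      qed
      define x where "x i j = f i j - fs i j" for i j
      define D where "D i = latency m a b f i - latency m a b fs i" for i
      have Deq: "D i = (\<Sum>j<m. a i j * x i j)" for i
        unfolding D_def latency_def x_def by (simp add: sum_subtractf algebra_simps)
      have A: "fs i j > 0" if "i < n" "j < m" "x i j \<noteq> 0" for i j
      proof (cases "f i j > 0")
        case True then show ?thesis using step1 that by blast
      next
        case False
        then have "f i j = 0" using f0[OF that(1,2)] by simp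
        then show ?thesis using that fs0[OF that(1,2)] unfolding x_def by simp
      qed
      have B: "D i \<le> D i'" if "j < m" "i < n" "i' < n" "x i j > 0" "x i' j < 0" for i i' j
      proof -
        have fp: "f i j > 0" using that f0[OF that(2,1)] fs0[OF that(2,1)] unfolding x_def by simp
        have a1: "fs i j > 0" using step1[OF that(2,1) fp] .
        have a2: "fs i' j > 0" using that f0[OF that(3,1)] unfolding x_def by simp
        show ?thesis using eqc[OF that(1,2) fp that(3)] a1 a2 unfolding opt_tolls_def D_def by simp
      qed
      have xsum: "(\<Sum>i<n. x i j) = 0" if "j < m" for j
        using Ff fs_feasible that unfolding feasible_def x_def by (simp add: sum_subtractf)
      have Cpos: "\<exists>i<n. x i j > 0" if "j < m" "i0 < n" "x i0 j \<noteq> 0" for j i0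
      proof (rule ccontr)
        assume "\<not> (\<exists>i<n. x i j > 0)"
        then have nn: "\<And>i. i \<in> {..<n} \<Longrightarrow> 0 \<le> - x i j" by auto
        have "(\<Sum>i<n. - x i j) = 0" using xsum[OF that(1)] by (simp add: sum_negf)
        then have "\<forall>i\<in>{..<n}. - x i j = 0" using sum_nonneg_eq_0_iff[of "{..<n}" "\<lambda>i. - x i j"] nn by simp
        then show False using that by simp
      qed
      have Cneg: "\<exists>i<n. x i j < 0" if "j < m" "i0 < n" "x i0 j \<noteq> 0" for j i0
      proof (rule ccontr)
        assume "\<not> (\<exists>i<n. x i j < 0)"
        then have nn: "\<And>i. i \<in> {..<n} \<Longrightarrow> 0 \<le> x i j" by auto
        have "\<forall>i\<in>{..<n}. x i j = 0" using sum_nonneg_eq_0_iff[of "{..<n}" "\<lambda>i. x i j"] nn xsum[OF that(1)] by simp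
        then show False using that by simp
      qed
      have Dpos: "\<exists>j<m. x i j > 0" if "i < n" "D i \<ge> 0" "j0 < m" "x i j0 \<noteq> 0" for i j0
      proof (rule ccontr)
        assume "\<not> (\<exists>j<m. x i j > 0)"
        then have nn: "\<And>j. j \<in> {..<m} \<Longrightarrow> 0 \<le> - (a i j * x i j)"
        proof -
          fix j assume jm: "j \<in> {..<m}"
          have "a i j > 0" using a_pos that(1) jm by simp
          moreover have "x i j \<le> 0" using \<open>\<not> (\<exists>j<m. x i j > 0)\<close> jm by auto
          ultimately have "a i j * x i j \<le> 0" using mult_nonneg_nonpos[of "a i j" "x i j"] by simp
          then show "0 \<le> - (a i j * x i j)" by simp
        qed
        have "x i j0 < 0" using that \<open>\<not> (\<exists>j<m. x i j > 0)\<close> by force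
        then have "0 < - (a i j0 * x i j0)" using a_pos that by (simp add: mult_pos_neg)
        then have "0 < (\<Sum>j<m. - (a i j * x i j))"
          using sum_pos2[of "{..<m}" j0 "\<lambda>j. - (a i j * x i j)"] nn that(3) by simp
        then show False using that(2) Deq[of i] by (simp add: sum_negf)
      qed
      have Dneg: "\<exists>j<m. x i j < 0" if "i < n" "D i \<le> 0" "j0 < m" "x i j0 \<noteq> 0" for i j0
      proof (rule ccontr)
        assume "\<not> (\<exists>j<m. x i j < 0)"
        then have nn: "\<And>j. j \<in> {..<m} \<Longrightarrow> 0 \<le> a i j * x i j"
          using a_pos that(1) by (auto simp: less_imp_le)
        have "x i j0 > 0" using that \<open>\<not> (\<exists>j<m. x i j < 0)\<close> by force
        then have "0 < a i j0 * x i j0" using a_pos that by simp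
        then have "0 < (\<Sum>j<m. a i j * x i j)"
          using sum_pos2[of "{..<m}" j0 "\<lambda>j. a i j * x i j"] nn that(3) by simp
        then show False using that(2) Deq[of i] by simp
      qed
      show "\<forall>i<n. \<forall>j<m. f i j = fs i j"
      proof (rule ccontr)
        assume "\<not> (\<forall>i<n. \<forall>j<m. f i j = fs i j)"
        then obtain i0 j0 where i0: "i0 < n" "j0 < m" "x i0 j0 \<noteq> 0" unfolding x_def by auto
        show False
        proof (cases "\<exists>i<n. D i \<ge> 0 \<and> (\<exists>j<m. x i j \<noteq> 0)")
          case True
          then obtain i1 where i1: "i1 < n" "D i1 \<ge> 0" "\<exists>j<m. x i1 j \<noteq> 0" by blast
          define S where "S = {i. i < n \<and> D i \<ge> 0 \<and> (\<exists>j<m. x i j \<noteq> 0)}"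
          have "\<not> support_acyclic n m fs"
          proof (rule walk_contra[of i1 S n m fs "\<lambda>i j. x i j > 0" "\<lambda>i j. x i j < 0"])
            show "i1 \<in> S" using i1 unfolding S_def by blast
            show "S \<subseteq> {..<n}" unfolding S_def by auto
            show "\<forall>i j. \<not> (0 < x i j \<and> x i j < 0)" by auto
            show "\<forall>i\<in>S. \<exists>j i'. i' \<in> S \<and> j < m \<and> 0 < fs i j \<and> 0 < fs i' j \<and> 0 < x i j \<and> x i' j < 0"
            proof
              fix i assume "i \<in> S"
              then have i: "i < n" "D i \<ge> 0" "\<exists>j<m. x i j \<noteq> 0" unfolding S_def by auto
              then obtain j where j: "j < m" "x i j > 0" using Dpos by blast
              then obtain i' where i': "i' < n" "x i' j < 0" using Cneg[of j i] i by auto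
              have "D i \<le> D i'" using B[OF j(1) i(1) i'(1) j(2) i'(2)] .
              then have "i' \<in> S" using i i' j unfolding S_def by auto
              moreover have "0 < fs i j" using A[OF i(1) j(1)] j by simp
              moreover have "0 < fs i' j" using A[OF i'(1) j(1)] i' by simp
              ultimately show "\<exists>j i'. i' \<in> S \<and> j < m \<and> 0 < fs i j \<and> 0 < fs i' j \<and> 0 < x i j \<and> x i' j < 0"
                using j i' by blast
            qed
          qed
          then show False using fs_acyclic by simp
        next
          case False
          then have Dn: "D i < 0" if "i < n" "j < m" "x i j \<noteq> 0" for i j
            using that by force
          define S where "S = {i. i < n \<and> D i < 0 \<and> (\<exists>j<m. x i j \<noteq> 0)}"
          have "\<not> support_acyclic n m fs"
          proof (rule walk_contra[of i0 S n m fs "\<lambda>i j. x i j < 0" "\<lambda>i j. x i j > 0"])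
            show "i0 \<in> S" using i0 Dn[OF i0] unfolding S_def by blast
            show "S \<subseteq> {..<n}" unfolding S_def by auto
            show "\<forall>i j. \<not> (x i j < 0 \<and> 0 < x i j)" by auto
            show "\<forall>i\<in>S. \<exists>j i'. i' \<in> S \<and> j < m \<and> 0 < fs i j \<and> 0 < fs i' j \<and> x i j < 0 \<and> 0 < x i' j"
            proof
              fix i assume "i \<in> S"
              then have i: "i < n" "D i < 0" "\<exists>j<m. x i j \<noteq> 0" unfolding S_def by auto
              then obtain j where j: "j < m" "x i j < 0" using Dneg[of i] by force
              then obtain i' where i': "i' < n" "x i' j > 0" using Cpos[of j i] i by auto
              have "D i' \<le> D i" using B[OF j(1) i'(1) i(1) i'(2) j(2)] .
              then have "i' \<in> S" using i i' j unfolding S_def by auto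
              moreover have "0 < fs i j" using A[OF i(1) j(1)] j by simp
              moreover have "0 < fs i' j" using A[OF i'(1) j(1)] i' by simp
              ultimately show "\<exists>j i'. i' \<in> S \<and> j < m \<and> 0 < fs i j \<and> 0 < fs i' j \<and> x i j < 0 \<and> 0 < x i' j"
                using j i' by blast
            qed
          qed
          then show False using fs_acyclic by simp
        qed
      qed
    qed
  qed
qed

end
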